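(* Let $\mathcal{X}$ be a measurable space, $K\ge1$, and let classifiers be measurable maps $\mathcal{X}\to[K]$. Let $\mathcal{B}$ assign to each $x$ a set $\mathcal{B}(x)\subseteq\mathcal{X}$ and let $\mathcal{N}(V)=\{x:\exists x'\in V,\ \mathcal{B}(x)\cap\mathcal{B}(x')\neq\emptyset\}$. Let $Q$ be a probability measure on $\mathcal{X}$ satisfying the $c$-expansion property for a non-increasing $c:[0,1]\to(0,\infty)$, i.e. $Q(\mathcal{N}(S))\ge c(Q(S))Q(S)$ for every measurable $S$. Let $F,H,G_{pl}$ be classifiers, $\gamma_H=c(Q(\{x:G_{pl}(x)\neq H(x)\}))$, and assume $\gamma_H>1$. Let $\mathcal{S}_{\mathcal{B}}(F)=\{x:F(x)=F(x')\ \forall x'\in\mathcal{B}(x)\}$ (similarly for $H$), with complements $\mathcal{S}_{\mathcal{B}}^c(\cdot)$; let $\mathcal{M}(F)=\{x:F(x)\neq H(x)\}$, $\mathcal{M}(G_{pl})=\{x:G_{pl}(x)\neq H(x)\}$, $\mathcal{M}_{pl}(F)=\{x:F(x)\neq G_{pl}(x)\}$. Define $$q=\frac{Q\big(\mathcal{M}_{pl}(F)\cup\mathcal{S}_{\mathcal{B}}^c(F)\cup\mathcal{S}_{\mathcal{B}}^c(H)\big)}{\gamma_H-1}.$$ Then $Q\big(\mathcal{S}_{\mathcal{B}}(F)\cap\mathcal{S}_{\mathcal{B}}(H)\cap\mathcal{M}(G_{pl})\cap\mathcal{M}(F)\big)\le q$. In particular, with $\mathcal{N}_1=\{x\in\mathcal{S}_{\mathcal{B}}(F)\cap\mathcal{S}_{\mathcal{B}}(H):F(x)=G_{pl}(x),\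 G_{pl}(x)\neq H(x)\}$ and $\mathcal{N}_2=\{x\in\mathcal{S}_{\mathcal{B}}(F)\cap\mathcal{S}_{\mathcal{B}}(H):F(x)\neq G_{pl}(x),\ G_{pl}(x)\neq H(x),\ F(x)\neq H(x)\}$, we have $Q(\mathcal{N}_1\cup\mathcal{N}_2)\le q$.
   Context: All sets are assumed measurable. *)

theory Defs
  imports "HOL-Probability.Probability"
begin

definition nbhd :: "'a measure \<Rightarrow> ('a \<Rightarrow> 'a set) \<Rightarrow> 'a set \<Rightarrow> 'a set" where
  "nbhd Q B V = {x \<in> space Q. \<exists>x'\<in>V. B x \<inter> B x' \<noteq> {}}"

definition expansion :: "'a measure \<Rightarrow> ('a \<Rightarrow> 'a set) \<Rightarrow> (real \<Rightarrow> real) \<Rightarrow> bool" where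
  "expansion Q B c \<longleftrightarrow> (\<forall>S\<in>sets Q. measure Q (nbhd Q B S) \<ge> c (measure Q S) * measure Q S)"

definition robust :: "'a measure \<Rightarrow> ('a \<Rightarrow> 'a set) \<Rightarrow> ('a \<Rightarrow> nat) \<Rightarrow> 'a set" where
  "robust Q B F = {x \<in> space Q. \<forall>x'\<in>B x. F x = F x'}"

end

theory Submission
  imports Defs
begin

lemma neq_set_meas:
  fixes K :: nat
  assumes "G \<in> measurable Q (count_space {1..K})" "H \<in> measurable Q (count_space {1..K})"
  shows "{x \<in> space Q. G x \<noteq> H x} \<in> sets Q"
proof -
  have eq: "{x \<in> space Q. G x \<noteq> H x} = (\<Union>i\<in>{1..K}. (G -` {i} \<inter> space Q) - (H -` {i} \<inter> space Q))"
    using measurable_space[OF assms(1)] by auto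
  show ?thesis unfolding eq
    using measurable_sets[OF assms(1)] measurable_sets[OF assms(2)]
    by (intro sets.finite_UN sets.Diff) auto
qed

theorem mainTheorem3:
  fixes Q :: "'a measure" and B :: "'a \<Rightarrow> 'a set" and c :: "real \<Rightarrow> real"
    and K :: nat and F H G :: "'a \<Rightarrow> nat"
  assumes "prob_space Q"
    and "K \<ge> 1"
    and "\<And>x. x \<in> space Q \<Longrightarrow> B x \<subseteq> space Q"
    and "\<And>S. S \<in> sets Q \<Longrightarrow> nbhd Q B S \<in> sets Q"
    and "\<And>t. t \<in> {0..1} \<Longrightarrow> c t > 0"
    and "\<And>s t. s \<in> {0..1} \<Longrightarrow> t \<in> {0..1} \<Longrightarrow> s \<le> t \<Longrightarrow> c t \<le> c s"
    and "expansion Q B c"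
    and "F \<in> measurable Q (count_space {1..K})"
    and "H \<in> measurable Q (count_space {1..K})"
    and "G \<in> measurable Q (count_space {1..K})"
    and "robust Q B F \<in> sets Q"
    and "robust Q B H \<in> sets Q"
    and "c (measure Q {x \<in> space Q. G x \<noteq> H x}) > 1"
  shows "measure Q (robust Q B F \<inter> robust Q B H \<inter> {x \<in> space Q. G x \<noteq> H x}
                     \<inter> {x \<in> space Q. F x \<noteq> H x})
           \<le> measure Q ({x \<in> space Q. F x \<noteq> G x} \<union> (space Q - robust Q B F)
                          \<union> (space Q - robust Q B H))
             / (c (measure Q {x \<in> space Q. G x \<noteq> H x}) - 1)
       \<and> measure Q ({x \<in> robust Q B F \<inter> robust Q B H. F x = G x \<and> G x \<noteq> H x}
                   \<union> {x \<in> robust Q B F \<inter> robust Q B H. F x \<noteq> G x \<and> G x \<noteq> H x \<and> F x \<noteq> H x})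
           \<le> measure Q ({x \<in> space Q. F x \<noteq> G x} \<union> (space Q - robust Q B F)
                          \<union> (space Q - robust Q B H))
             / (c (measure Q {x \<in> space Q. G x \<noteq> H x}) - 1)"
proof -
  interpret prob_space Q by fact
  define MG where "MG = {x \<in> space Q. G x \<noteq> H x}"
  define A where "A = robust Q B F \<inter> robust Q B H \<inter> MG \<inter> {x \<in> space Q. F x \<noteq> H x}"
  define Bs where "Bs = {x \<in> space Q. F x \<noteq> G x} \<union> (space Q - robust Q B F) \<union> (space Q - robust Q B H)"
  define \<gamma> where "\<gamma> = c (measure Q MG)"
  have MGm: "MG \<in> sets Q" unfolding MG_def using neq_set_meas[OF assms(10,9)] .
  have m2: "{x \<in> space Q. F x \<noteq> H x} \<in> sets Q" using neq_set_meas[OF assms(8,9)] .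
  have m3: "{x \<in> space Q. F x \<noteq> G x} \<in> sets Q" using neq_set_meas[OF assms(8,10)] .
  have Am: "A \<in> sets Q" unfolding A_def using MGm m2 assms(11,12) by auto
  have Bm: "Bs \<in> sets Q" unfolding Bs_def using m3 assms(11,12) by auto
  have sub: "nbhd Q B A \<subseteq> A \<union> Bs"
  proof
    fix x assume "x \<in> nbhd Q B A"
    then obtain x' z where x: "x \<in> space Q" and x': "x' \<in> A" and z: "z \<in> B x" "z \<in> B x'"
      unfolding nbhd_def by blast
    show "x \<in> A \<union> Bs"
    proof (cases "x \<in> robust Q B F \<and> x \<in> robust Q B H")
      case True
      have "F x = F z" "H x = H z" using True z unfolding robust_def by auto
      moreover have "F x' = F z" "H x' = H z" "F x' \<noteq> H x'" using x' z unfolding robust_def A_def by auto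
      ultimately have "F x \<noteq> H x" by simp
      then show ?thesis using True x unfolding A_def Bs_def MG_def by auto
    next
      case False
      then show ?thesis using x unfolding Bs_def by auto
    qed
  qed
  have "c (measure Q A) * measure Q A \<le> measure Q (nbhd Q B A)"
    using assms(7) Am unfolding expansion_def by auto
  also have "\<dots> \<le> measure Q (A \<union> Bs)"
    using sub Am Bm by (intro finite_measure_mono) auto
  also have "\<dots> \<le> measure Q A + measure Q Bs"
    using Am Bm by (rule measure_subadditive; simp)
  finally have e1: "c (measure Q A) * measure Q A \<le> measure Q A + measure Q Bs" .
  have "A \<subseteq> MG" unfolding A_def by auto
  hence "measure Q A \<le> measure Q MG" using MGm by (intro finite_measure_mono) auto
  hence "\<gamma> \<le> c (measure Q A)" unfolding \<gamma>_def
    by (intro assms(6)) auto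
  moreover have g1: "\<gamma> > 1" using assms(13) unfolding \<gamma>_def MG_def .
  moreover have "measure Q A \<ge> 0" by simp
  ultimately have "(\<gamma> - 1) * measure Q A \<le> (c (measure Q A) - 1) * measure Q A"
    by (intro mult_right_mono) auto
  hence "(\<gamma> - 1) * measure Q A \<le> measure Q Bs"
    using e1 by (simp add: algebra_simps)
  hence main: "measure Q A \<le> measure Q Bs / (\<gamma> - 1)"
    using g1 by (simp add: field_simps)
  have sub2: "{x \<in> robust Q B F \<inter> robust Q B H. F x = G x \<and> G x \<noteq> H x}
                   \<union> {x \<in> robust Q B F \<inter> robust Q B H. F x \<noteq> G x \<and> G x \<noteq> H x \<and> F x \<noteq> H x} \<subseteq> A"
    unfolding A_def MG_def robust_def by auto
  have "measure Q ({x \<in> robust Q B F \<inter> robust Q B H. F x = G x \<and> G x \<noteq> H x}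
                   \<union> {x \<in> robust Q B F \<inter> robust Q B H. F x \<noteq> G x \<and> G x \<noteq> H x \<and> F x \<noteq> H x}) \<le> measure Q A"
    using sub2 Am by (intro finite_measure_mono) auto
  with main show ?thesis unfolding A_def Bs_def \<gamma>_def MG_def by linarith
qed

end
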